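(* No graph in $\mathfrak D_4$ contains an induced cube, i.e. an induced subgraph isomorphic to the graph obtained from $K_{4,4}$ by deleting a perfect matching.
   Context: $\mathfrak D_4$ is the class of (finite) maximal triangle-free graphs satisfying property $\mathscr{D}_4$. Maximal triangle-free: no triangle, and adding any new edge creates a triangle. Property $\mathscr{D}_k$: for every $m\in\{1,\dots,k\}$ and every sequence $x_1,\dots,x_{3m}$ of (not necessarily distinct) vertices there is a vertex $y$ with $|\{i\in[3m]: x_iy\in E(G)\}|\ge m+1$. *)

theory Defs
  imports Main
begin

definition simple_graph :: "'a set \<Rightarrow> ('a \<Rightarrow> 'a \<Rightarrow> bool) \<Rightarrow> bool" where
  "simple_graph V E \<longleftrightarrow> finite V \<and> (\<forall>u v. E u v \<longrightarrow> u \<in> V \<and> v \<in> V) \<and>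
     (\<forall>u v. E u v \<longrightarrow> E v u) \<and> (\<forall>u. \<not> E u u)"

definition triangle_free :: "'a set \<Rightarrow> ('a \<Rightarrow> 'a \<Rightarrow> bool) \<Rightarrow> bool" where
  "triangle_free V E \<longleftrightarrow> \<not> (\<exists>a\<in>V. \<exists>b\<in>V. \<exists>c\<in>V. E a b \<and> E b c \<and> E a c)"

text \<open>Maximal triangle-free: triangle-free, and adding any new edge uv
(u, v distinct non-adjacent vertices) creates a triangle, i.e. u and v
have a common neighbour.\<close>

definition maximal_triangle_free :: "'a set \<Rightarrow> ('a \<Rightarrow> 'a \<Rightarrow> bool) \<Rightarrow> bool" where
  "maximal_triangle_free V E \<longleftrightarrow> triangle_free V E \<and>
     (\<forall>u\<in>V. \<forall>v\<in>V. u \<noteq> v \<and> \<not> E u v \<longrightarrow> (\<exists>w\<in>V. E u w \<and> E w v))"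

text \<open>Property D_k: for every m in {1..k} and every sequence x_1..x_{3m}
(indexed here by 0..3m-1) of not necessarily distinct vertices, some vertex y
is adjacent to at least m+1 of the x_i (counted with multiplicity of index).\<close>

definition property_D :: "nat \<Rightarrow> 'a set \<Rightarrow> ('a \<Rightarrow> 'a \<Rightarrow> bool) \<Rightarrow> bool" where
  "property_D k V E \<longleftrightarrow>
     (\<forall>m\<in>{1..k}. \<forall>x :: nat \<Rightarrow> 'a. (\<forall>i<3*m. x i \<in> V) \<longrightarrow>
        (\<exists>y\<in>V. card {i. i < 3*m \<and> E (x i) y} \<ge> m + 1))"

definition in_frak_D4 :: "'a set \<Rightarrow> ('a \<Rightarrow> 'a \<Rightarrow> bool) \<Rightarrow> bool" where
  "in_frak_D4 V E \<longleftrightarrow> simple_graph V E \<and> maximal_triangle_free V E \<and> property_D 4 V E"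

text \<open>The cube: K_{4,4} minus a perfect matching. Vertices (s,i) with s::bool
(side) and i<4; (s,i) ~ (t,j) iff s \<noteq> t and i \<noteq> j.\<close>

definition cube_vertices :: "(bool \<times> nat) set" where
  "cube_vertices = UNIV \<times> {0..<4}"

definition cube_adj :: "bool \<times> nat \<Rightarrow> bool \<times> nat \<Rightarrow> bool" where
  "cube_adj p q \<longleftrightarrow> fst p \<noteq> fst q \<and> snd p \<noteq> snd q"

definition has_induced_cube :: "'a set \<Rightarrow> ('a \<Rightarrow> 'a \<Rightarrow> bool) \<Rightarrow> bool" where
  "has_induced_cube V E \<longleftrightarrow> (\<exists>f. inj_on f cube_vertices \<and> f ` cube_vertices \<subseteq> V \<and>
     (\<forall>p\<in>cube_vertices. \<forall>q\<in>cube_vertices. E (f p) (f q) \<longleftrightarrow> cube_adj p q))"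

end

theory Submission imports Defs begin
lemma card_ind: "card {i. i < (n::nat) \<and> P i} = (\<Sum>i<n. if P i then 1 else 0)"
proof (induction n)
  case 0
  show ?case by simp
next
  case (Suc n)
  show ?case
  proof (cases "P n")
    case True
    have "{i. i < Suc n \<and> P i} = insert n {i. i < n \<and> P i}" using True by (auto simp: less_Suc_eq)
    then show ?thesis using True Suc by simp
  next
    case False
    have "{i. i < Suc n \<and> P i} = {i. i < n \<and> P i}" using False by (auto simp: less_Suc_eq)
    then show ?thesis using False Suc by simp
  qed
qed

lemma c12:
  fixes P :: "nat \<Rightarrow> bool"
  assumes "\<And>i j. i < 4 \<Longrightarrow> j < 4 \<Longrightarrow> i \<noteq> j \<Longrightarrow> \<not> (P i \<and> P (4+j))"
   "\<not>(P 0 \<and> P 8)" "\<not>(P 4 \<and> P 8)" "\<not>(P 8 \<and> P 9)" "\<not>(P 1 \<and> P 9)" "\<not>(P 5 \<and> P 9)"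
   "\<not>(P 2 \<and> P 10)" "\<not>(P 6 \<and> P 10)" "\<not>(P 10 \<and> P 11)" "\<not>(P 3 \<and> P 11)" "\<not>(P 7 \<and> P 11)"
  shows "card {i. i < 12 \<and> P i} \<le> 4"
proof -
  have e: "\<not>(P 0 \<and> P 5)" "\<not>(P 0 \<and> P 6)" "\<not>(P 0 \<and> P 7)"
     "\<not>(P 1 \<and> P 4)" "\<not>(P 1 \<and> P 6)" "\<not>(P 1 \<and> P 7)"
     "\<not>(P 2 \<and> P 4)" "\<not>(P 2 \<and> P 5)" "\<not>(P 2 \<and> P 7)"
     "\<not>(P 3 \<and> P 4)" "\<not>(P 3 \<and> P 5)" "\<not>(P 3 \<and> P 6)"
    using assms(1)[of 0 1] assms(1)[of 0 2] assms(1)[of 0 3] assms(1)[of 1 0] assms(1)[of 1 2] assms(1)[of 1 3]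
     assms(1)[of 2 0] assms(1)[of 2 1] assms(1)[of 2 3] assms(1)[of 3 0] assms(1)[of 3 1] assms(1)[of 3 2] by auto
  show ?thesis unfolding card_ind using e assms(2-)
    by (simp add: lessThan_Suc numeral_eq_Suc)
qed

lemma c6:
  fixes P :: "nat \<Rightarrow> bool"
  assumes "\<not>(P 0 \<and> P 3)" "\<not>(P 1 \<and> P 2)" "\<not>(P 0 \<and> P 4)" "\<not>(P 2 \<and> P 4)"
   "\<not>(P 1 \<and> P 5)" "\<not>(P 3 \<and> P 5)" "\<not>(P 0 \<and> P 2 \<and> P 5)" "\<not>(P 1 \<and> P 3 \<and> P 4)"
  shows "card {i. i < 6 \<and> P i} \<le> 2"
  unfolding card_ind using assms by (simp add: lessThan_Suc numeral_eq_Suc)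

lemma tri:
  assumes G: "in_frak_D4 V E" and "u \<in> V" "v \<in> V" "y \<in> V" "E u v" "E u y" "E v y"
  shows False
  using assms unfolding in_frak_D4_def maximal_triangle_free_def triangle_free_def by blast

lemma symE: assumes G: "in_frak_D4 V E" and "E u v" shows "E v u"
  using assms unfolding in_frak_D4_def simple_graph_def by blast

lemma inV: assumes G: "in_frak_D4 V E" and "E u v" shows "u \<in> V" "v \<in> V"
  using assms unfolding in_frak_D4_def simple_graph_def by blast+

lemma link:
  assumes G: "in_frak_D4 V E" and V: "ai \<in> V" "aj \<in> V" "bi \<in> V" "bj \<in> V"
    and e: "E ai bj" "E aj bi" "\<not> E ai bi" "\<not> E aj bj" "ai \<noteq> bi" "aj \<noteq> bj"
  shows "\<exists>p\<in>V. \<exists>q\<in>V. E p ai \<and> E p bi \<and> E q aj \<and> E q bj \<and> E p q"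
proof (rule ccontr)
  assume H: "\<not> ?thesis"
  have mx: "maximal_triangle_free V E" using G unfolding in_frak_D4_def by blast
  obtain ci where ci: "ci \<in> V" "E ai ci" "E ci bi" using mx V e unfolding maximal_triangle_free_def by blast
  obtain cj where cj: "cj \<in> V" "E aj cj" "E cj bj" using mx V e unfolding maximal_triangle_free_def by blast
  define x where "x = (\<lambda>k::nat. [ai,aj,bi,bj,ci,cj] ! k)"
  have x: "x 0 = ai" "x 1 = aj" "x 2 = bi" "x 3 = bj" "x 4 = ci" "x 5 = cj"
    by (simp_all add: x_def)
  have xV: "\<forall>k<3*2. x k \<in> V"
  proof (intro allI impI)
    fix k :: nat assume "k < 3*2"
    then have "k = 0 \<or> k = 1 \<or> k = 2 \<or> k = 3 \<or> k = 4 \<or> k = 5" by auto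
    then show "x k \<in> V" using x V ci cj by auto
  qed
  have D: "property_D 4 V E" using G unfolding in_frak_D4_def by blast
  obtain y where y: "y \<in> V" "card {k. k < 3*2 \<and> E (x k) y} \<ge> 2 + 1"
    using bspec[OF D[unfolded property_D_def], of 2] xV by auto
  have sy: "\<And>u. E u y \<Longrightarrow> E y u" using symE[OF G] by blast
  have "card {k. k < 6 \<and> E (x k) y} \<le> 2"
  proof (rule c6)
    show "\<not>(E (x 0) y \<and> E (x 3) y)" using tri[OF G V(1) V(4) y(1) e(1)] x by auto
    show "\<not>(E (x 1) y \<and> E (x 2) y)" using tri[OF G V(2) V(3) y(1) e(2)] x by auto
    show "\<not>(E (x 0) y \<and> E (x 4) y)" using tri[OF G V(1) ci(1) y(1) ci(2)] x by auto
    show "\<not>(E (x 2) y \<and> E (x 4) y)" using tri[OF G V(3) ci(1) y(1) symE[OF G ci(3)]] x by auto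
    show "\<not>(E (x 1) y \<and> E (x 5) y)" using tri[OF G V(2) cj(1) y(1) cj(2)] x by auto
    show "\<not>(E (x 3) y \<and> E (x 5) y)" using tri[OF G V(4) cj(1) y(1) symE[OF G cj(3)]] x by auto
    show "\<not>(E (x 0) y \<and> E (x 2) y \<and> E (x 5) y)"
    proof
      assume a: "E (x 0) y \<and> E (x 2) y \<and> E (x 5) y"
      then have "E y ai" "E y bi" "E cj aj" "E cj bj" "E y cj" using x sy symE[OF G cj(2)] cj by auto
      then show False using H y(1) cj(1) by blast
    qed
    show "\<not>(E (x 1) y \<and> E (x 3) y \<and> E (x 4) y)"
    proof
      assume a: "E (x 1) y \<and> E (x 3) y \<and> E (x 4) y"
      then have "E ci ai" "E ci bi" "E y aj" "E y bj" "E ci y" using x sy symE[OF G ci(2)] ci by auto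
      then show False using H y(1) ci(1) by blast
    qed
  qed
  then show False using y(2) by simp
qed

theorem mainTheorem11:
  fixes V :: "'a set" and E :: "'a \<Rightarrow> 'a \<Rightarrow> bool"
  assumes "in_frak_D4 V E"
  shows "\<not> has_induced_cube V E"
proof
  note G = assms
  assume "has_induced_cube V E"
  then obtain f where f0: "inj_on f cube_vertices \<and> f ` cube_vertices \<subseteq> V \<and>
     (\<forall>p\<in>cube_vertices. \<forall>q\<in>cube_vertices. E (f p) (f q) \<longleftrightarrow> cube_adj p q)"
    unfolding has_induced_cube_def by (rule exE)
  have f: "inj_on f cube_vertices" "f ` cube_vertices \<subseteq> V"
    "\<And>p q. p \<in> cube_vertices \<Longrightarrow> q \<in> cube_vertices \<Longrightarrow> E (f p) (f q) \<longleftrightarrow> cube_adj p q"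
    using f0 by auto
  define a where "a = (\<lambda>i::nat. f (True, i))"
  define b where "b = (\<lambda>i::nat. f (False, i))"
  have cv: "\<And>s i. i < 4 \<Longrightarrow> (s, i) \<in> cube_vertices" by (simp add: cube_vertices_def)
  have aV: "\<And>i. i < 4 \<Longrightarrow> a i \<in> V" using f(2) cv unfolding a_def by blast
  have bV: "\<And>i. i < 4 \<Longrightarrow> b i \<in> V" using f(2) cv unfolding b_def by blast
  have ab: "\<And>i j. i < 4 \<Longrightarrow> j < 4 \<Longrightarrow> E (a i) (b j) \<longleftrightarrow> i \<noteq> j"
  proof -
    fix i j :: nat assume i: "i < 4" and j: "j < 4"
    have "E (a i) (b j) \<longleftrightarrow> cube_adj (True, i) (False, j)"
      unfolding a_def b_def by (rule f(3)[OF cv[OF i] cv[OF j]])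
    then show "E (a i) (b j) \<longleftrightarrow> i \<noteq> j" by (simp add: cube_adj_def)
  qed
  have neq: "\<And>i. i < 4 \<Longrightarrow> a i \<noteq> b i"
  proof
    fix i :: nat assume i: "i < 4" and h: "a i = b i"
    have "(True, i) = (False, i)"
      using inj_onD[OF f(1) h[unfolded a_def b_def] cv[OF i] cv[OF i]] .
    then show False by simp
  qed
  have l01: "E (a 0) (b 1)" "E (a 1) (b 0)" "\<not> E (a 0) (b 0)" "\<not> E (a 1) (b 1)" "a 0 \<noteq> b 0" "a 1 \<noteq> b 1"
    using ab[of 0 1] ab[of 1 0] ab[of 0 0] ab[of 1 1] neq[of 0] neq[of 1] by simp_all
  have l23: "E (a 2) (b 3)" "E (a 3) (b 2)" "\<not> E (a 2) (b 2)" "\<not> E (a 3) (b 3)" "a 2 \<noteq> b 2" "a 3 \<noteq> b 3"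
    using ab[of 2 3] ab[of 3 2] ab[of 2 2] ab[of 3 3] neq[of 2] neq[of 3] by simp_all
  obtain p q where pq: "p \<in> V" "q \<in> V" "E p (a 0)" "E p (b 0)" "E q (a 1)" "E q (b 1)" "E p q"
    using link[OF G aV[of 0] aV[of 1] bV[of 0] bV[of 1] l01] by auto
  obtain r s where rs: "r \<in> V" "s \<in> V" "E r (a 2)" "E r (b 2)" "E s (a 3)" "E s (b 3)" "E r s"
    using link[OF G aV[of 2] aV[of 3] bV[of 2] bV[of 3] l23] by auto
  define x where "x = (\<lambda>k::nat. if k < 4 then a k else if k < 8 then b (k - 4) else [p,q,r,s] ! (k - 8))"
  have xa: "\<And>i. i < 4 \<Longrightarrow> x i = a i" by (simp add: x_def)
  have xb: "\<And>j. j < 4 \<Longrightarrow> x (4 + j) = b j" by (simp add: x_def)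
  have xp: "x 8 = p" "x 9 = q" "x 10 = r" "x 11 = s" by (simp_all add: x_def)
  have xs: "x 0 = a 0" "x 1 = a 1" "x 2 = a 2" "x 3 = a 3" "x 4 = b 0" "x 5 = b 1" "x 6 = b 2" "x 7 = b 3"
    by (simp_all add: x_def)
  have xV: "\<forall>k<3*4. x k \<in> V"
  proof (intro allI impI)
    fix k :: nat assume k: "k < 3*4"
    show "x k \<in> V"
    proof (cases "k < 8")
      case True
      then show ?thesis using aV bV unfolding x_def by auto
    next
      case False
      then have "k = 8 \<or> k = 9 \<or> k = 10 \<or> k = 11" using k by auto
      then show ?thesis using xp pq rs by auto
    qed
  qed
  have D: "property_D 4 V E" using G unfolding in_frak_D4_def by blast
  obtain y where y: "y \<in> V" "card {k. k < 3*4 \<and> E (x k) y} \<ge> 4 + 1"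
    using bspec[OF D[unfolded property_D_def], of 4] xV by auto
  have "card {k. k < 12 \<and> E (x k) y} \<le> 4"
  proof (rule c12)
    fix i j :: nat assume ij: "i < 4" "j < 4" "i \<noteq> j"
    show "\<not> (E (x i) y \<and> E (x (4 + j)) y)"
      using tri[OF G aV[OF ij(1)] bV[OF ij(2)] y(1)] ab[OF ij(1,2)] ij xa xb by auto
  next
    have t: "\<And>u v. E u v \<Longrightarrow> \<not> (E u y \<and> E v y)"
    proof
      fix u v assume uv: "E u v" and h: "E u y \<and> E v y"
      show False using tri[OF G inV(1)[OF G uv] inV(2)[OF G uv] y(1) uv] h by blast
    qed
    have t': "\<And>u v. E v u \<Longrightarrow> \<not> (E u y \<and> E v y)" using t symE[OF G] by metis
    show "\<not>(E (x 0) y \<and> E (x 8) y)" using t' pq xs xp by auto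
    show "\<not>(E (x 4) y \<and> E (x 8) y)" using t' pq xs xp by auto
    show "\<not>(E (x 8) y \<and> E (x 9) y)" using t pq xs xp by auto
    show "\<not>(E (x 1) y \<and> E (x 9) y)" using t' pq xs xp by auto
    show "\<not>(E (x 5) y \<and> E (x 9) y)" using t' pq xs xp by auto
    show "\<not>(E (x 2) y \<and> E (x 10) y)" using t' rs xs xp by auto
    show "\<not>(E (x 6) y \<and> E (x 10) y)" using t' rs xs xp by auto
    show "\<not>(E (x 10) y \<and> E (x 11) y)" using t rs xs xp by auto
    show "\<not>(E (x 3) y \<and> E (x 11) y)" using t' rs xs xp by auto
    show "\<not>(E (x 7) y \<and> E (x 11) y)" using t' rs xs xp by auto
  qed
  then show False using y(2) by simp
qed

end
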